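(* Let $\boldsymbol T=(T_1,\dots,T_d)$ be a subnormal commuting $d$-tuple on a Hilbert space $\mathcal H$ with minimal normal extension $\boldsymbol N$ on $\mathcal K\supseteq\mathcal H$. Let $p_1,\dots,p_n,q_1,\dots,q_n$ be analytic polynomials in $d$ variables. If $\sum_{i=1}^n q_i(\boldsymbol T)^*p_i(\boldsymbol T)=I_{\mathcal H}$, then $\sum_{i=1}^n q_i(\boldsymbol N)^*p_i(\boldsymbol N)=I_{\mathcal K}$.
   Context: A commuting tuple $\boldsymbol T$ on $\mathcal H$ is subnormal if there is a commuting tuple $\boldsymbol N$ of normal operators on a Hilbert space $\mathcal K\supseteq\mathcal H$ with $N_i\mathcal H\subseteq\mathcal H$ and $N_i|_{\mathcal H}=T_i$ for all $i$; the extension is minimal if $\mathcal K$ is the closed span of $\{\boldsymbol N^{*\alpha}h: h\in\mathcal H,\ \alpha\in\mathbb N^d\}$. In hereditary functional calculus notation, $\sum_i p_i(z)\overline{q_i(w)}(\boldsymbol T,\boldsymbol T^* ):=\sum_i q_i(\boldsymbol T)^*p_i(\boldsymbol T)$. *)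

theory Defs
  imports "HOL-Analysis.Analysis"
begin

class complex_vector = real_vector +
  fixes scaleC :: "complex \<Rightarrow> 'a \<Rightarrow> 'a"
  assumes scaleC_add_right: "scaleC a (x + y) = scaleC a x + scaleC a y"
    and scaleC_add_left: "scaleC (a + b) x = scaleC a x + scaleC b x"
    and scaleC_scaleC: "scaleC a (scaleC b x) = scaleC (a * b) x"
    and scaleC_one: "scaleC 1 x = x"
    and scaleR_scaleC: "scaleR r x = scaleC (complex_of_real r) x"

text \<open>Inner product, conjugate-linear in the first and linear in the second argument;
  the norm is the one induced by the inner product.\<close>
class complex_inner = complex_vector + real_normed_vector +
  fixes cinner :: "'a \<Rightarrow> 'a \<Rightarrow> complex"
  assumes cinner_commute: "cinner x y = cnj (cinner y x)"
    and cinner_add_right: "cinner x (y + z) = cinner x y + cinner x z"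
    and cinner_scaleC_right: "cinner x (scaleC r y) = r * cinner x y"
    and cinner_norm: "cinner x x = complex_of_real ((norm x)\<^sup>2)"

class chilbert = complex_inner + complete_space

definition clinear :: "('a::complex_vector \<Rightarrow> 'b::complex_vector) \<Rightarrow> bool" where
  "clinear A \<longleftrightarrow> (\<forall>x y. A (x + y) = A x + A y) \<and> (\<forall>c x. A (scaleC c x) = scaleC c (A x))"

definition cbounded :: "('a::complex_inner \<Rightarrow> 'b::complex_inner) \<Rightarrow> bool" where
  "cbounded A \<longleftrightarrow> clinear A \<and> (\<exists>K. \<forall>x. norm (A x) \<le> norm x * K)"

definition cadjoint :: "('a::complex_inner \<Rightarrow> 'b::complex_inner) \<Rightarrow> ('b \<Rightarrow> 'a)" where
  "cadjoint A = (SOME B. \<forall>x y. cinner (A x) y = cinner x (B y))"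

definition cnormal :: "('a::complex_inner \<Rightarrow> 'a) \<Rightarrow> bool" where
  "cnormal A \<longleftrightarrow> cbounded A \<and> A \<circ> cadjoint A = cadjoint A \<circ> A"

definition cisometry :: "('a::complex_inner \<Rightarrow> 'b::complex_inner) \<Rightarrow> bool" where
  "cisometry V \<longleftrightarrow> clinear V \<and> (\<forall>x y. cinner (V x) (V y) = cinner x y)"

definition cspan :: "'a::complex_vector set \<Rightarrow> 'a set" where
  "cspan S = {(\<Sum>x\<in>F. scaleC (c x) x) | F c. finite F \<and> F \<subseteq> S}"

text \<open>A d-tuple of operators is a function on indices 0..<d; multi-indices are
  functions nat \<Rightarrow> nat (only the values below d matter).\<close>

definition commuting_tuple :: "nat \<Rightarrow> (nat \<Rightarrow> 'a::complex_inner \<Rightarrow> 'a) \<Rightarrow> bool" where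
  "commuting_tuple d T \<longleftrightarrow> (\<forall>i<d. cbounded (T i)) \<and> (\<forall>i<d. \<forall>j<d. T i \<circ> T j = T j \<circ> T i)"

definition mono_op :: "nat \<Rightarrow> (nat \<Rightarrow> 'a \<Rightarrow> 'a) \<Rightarrow> (nat \<Rightarrow> nat) \<Rightarrow> ('a \<Rightarrow> 'a)" where
  "mono_op d T \<alpha> = fold (\<lambda>i f. (T i ^^ \<alpha> i) \<circ> f) [0..<d] id"

text \<open>An analytic polynomial in d variables with complex coefficients, given by its
  coefficient function on multi-indices.\<close>
definition is_poly :: "nat \<Rightarrow> ((nat \<Rightarrow> nat) \<Rightarrow> complex) \<Rightarrow> bool" where
  "is_poly d p \<longleftrightarrow> finite {\<alpha>. p \<alpha> \<noteq> 0} \<and> (\<forall>\<alpha>. p \<alpha> \<noteq> 0 \<longrightarrow> (\<forall>j\<ge>d. \<alpha> j = 0))"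

definition poly_op :: "nat \<Rightarrow> (nat \<Rightarrow> 'a::complex_vector \<Rightarrow> 'a) \<Rightarrow> ((nat \<Rightarrow> nat) \<Rightarrow> complex) \<Rightarrow> ('a \<Rightarrow> 'a)" where
  "poly_op d T p = (\<lambda>x. \<Sum>\<alpha>\<in>{\<alpha>. p \<alpha> \<noteq> 0}. scaleC (p \<alpha>) (mono_op d T \<alpha> x))"

text \<open>H is embedded in K by the isometry V (so H is identified with the range of V);
  N is a normal extension of T: N_i V = V T_i.\<close>
definition normal_extension ::
  "nat \<Rightarrow> (nat \<Rightarrow> 'h::chilbert \<Rightarrow> 'h) \<Rightarrow> (nat \<Rightarrow> 'k::chilbert \<Rightarrow> 'k) \<Rightarrow> ('h \<Rightarrow> 'k) \<Rightarrow> bool" where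
  "normal_extension d T N V \<longleftrightarrow> commuting_tuple d T \<and> commuting_tuple d N \<and>
     (\<forall>i<d. cnormal (N i)) \<and> cisometry V \<and> (\<forall>i<d. N i \<circ> V = V \<circ> T i)"

definition minimal_normal_extension ::
  "nat \<Rightarrow> (nat \<Rightarrow> 'h::chilbert \<Rightarrow> 'h) \<Rightarrow> (nat \<Rightarrow> 'k::chilbert \<Rightarrow> 'k) \<Rightarrow> ('h \<Rightarrow> 'k) \<Rightarrow> bool" where
  "minimal_normal_extension d T N V \<longleftrightarrow> normal_extension d T N V \<and>
     closure (cspan {mono_op d (\<lambda>i. cadjoint (N i)) \<alpha> (V h) | \<alpha> h. True}) = UNIV"

end

theory Submission
  imports Defs "HOL-Complex_Analysis.Complex_Analysis"
begin

context chilbert begin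
subclass banach ..
end

lemma scaleC_zero_right[simp]: "scaleC a (0::'a::complex_vector) = 0"
  by (metis add_cancel_right_right scaleC_add_right)
lemma scaleC_zero_left[simp]: "scaleC 0 (x::'a::complex_vector) = 0"
  by (metis add_cancel_right_right add_0 scaleC_add_left)
lemma scaleC_minus_right: "scaleC a (- x::'a::complex_vector) = - scaleC a x"
  by (metis add_eq_0_iff2 neg_eq_iff_add_eq_0 scaleC_add_right scaleC_zero_right)
lemma scaleC_diff_right: "scaleC a (x - y::'a::complex_vector) = scaleC a x - scaleC a y"
  by (metis diff_conv_add_uminus scaleC_add_right scaleC_minus_right)
lemma scaleC_minus_left: "scaleC (- a) (x::'a::complex_vector) = - scaleC a x"
  by (metis add_eq_0_iff2 neg_eq_iff_add_eq_0 scaleC_add_left scaleC_zero_left)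
lemma scaleC_diff_left: "scaleC (a - b) (x::'a::complex_vector) = scaleC a x - scaleC b x"
  by (metis diff_conv_add_uminus scaleC_add_left scaleC_minus_left)
lemma scaleC_sum_right: "scaleC a (sum f A) = (\<Sum>i\<in>A. scaleC a (f i::'a::complex_vector))"
  by (induction A rule: infinite_finite_induct) (auto simp: scaleC_add_right)
lemma scaleC_sum_left: "scaleC (sum f A) x = (\<Sum>i\<in>A. scaleC (f i) (x::'a::complex_vector))"
  by (induction A rule: infinite_finite_induct) (auto simp: scaleC_add_left)

lemma cinner_add_left: "cinner (x + y) (z::'a::complex_inner) = cinner x z + cinner y z"
  by (metis cinner_add_right cinner_commute complex_cnj_add)
lemma cinner_scaleC_left: "cinner (scaleC r x) (y::'a::complex_inner) = cnj r * cinner x y"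
  by (metis cinner_commute cinner_scaleC_right complex_cnj_mult)
lemma cinner_zero_right[simp]: "cinner x (0::'a::complex_inner) = 0"
  by (metis add_cancel_right_right cinner_add_right)
lemma cinner_zero_left[simp]: "cinner (0::'a::complex_inner) x = 0"
  by (metis add_cancel_right_right cinner_add_left)
lemma cinner_minus_right: "cinner x (- y::'a::complex_inner) = - cinner x y"
  by (metis add_eq_0_iff2 neg_eq_iff_add_eq_0 cinner_add_right cinner_zero_right)
lemma cinner_minus_left: "cinner (- x) (y::'a::complex_inner) = - cinner x y"
  by (metis add_eq_0_iff2 neg_eq_iff_add_eq_0 cinner_add_left cinner_zero_left)
lemma cinner_diff_right: "cinner x (y - z::'a::complex_inner) = cinner x y - cinner x z"
  by (simp only: diff_conv_add_uminus cinner_add_right cinner_minus_right)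
lemma cinner_diff_left: "cinner (x - y) (z::'a::complex_inner) = cinner x z - cinner y z"
  by (simp only: diff_conv_add_uminus cinner_add_left cinner_minus_left)
lemma cinner_sum_right: "cinner x (sum f A) = (\<Sum>i\<in>A. cinner x (f i::'a::complex_inner))"
  by (induction A rule: infinite_finite_induct) (auto simp: cinner_add_right)
lemma cinner_sum_left: "cinner (sum f A) x = (\<Sum>i\<in>A. cinner (f i) (x::'a::complex_inner))"
  by (induction A rule: infinite_finite_induct) (auto simp: cinner_add_left)
lemma cinner_scaleR_left: "cinner (scaleR r x) (y::'a::complex_inner) = of_real r * cinner x y"
  by (simp add: scaleR_scaleC cinner_scaleC_left)
lemma cinner_scaleR_right: "cinner x (scaleR r y::'a::complex_inner) = of_real r * cinner x y"
  by (simp add: scaleR_scaleC cinner_scaleC_right)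
lemma cinner_self_eq_0[simp]: "cinner x x = 0 \<longleftrightarrow> x = (0::'a::complex_inner)"
  by (simp add: cinner_norm)

lemma cauchy_schwarz: "cmod (cinner x y) \<le> norm x * norm (y::'a::complex_inner)"
proof (cases "y = 0")
  case True then show ?thesis by simp
next
  case False
  define t where "t = cinner y x / of_real ((norm y)\<^sup>2)"
  have ny: "norm y > 0" using False by simp
  have "complex_of_real ((norm (x - scaleC t y))\<^sup>2) = cinner (x - scaleC t y) (x - scaleC t y)"
    by (simp add: cinner_norm)
  also have "\<dots> = cinner x x - t * cinner x y - cnj t * cinner y x + cnj t * t * cinner y y"
    by (simp add: cinner_diff_left cinner_diff_right cinner_scaleC_left cinner_scaleC_right algebra_simps)
  also have "\<dots> = of_real ((norm x)\<^sup>2) - cinner x y * cinner y x / of_real ((norm y)\<^sup>2)"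
    using ny by (simp add: t_def cinner_norm field_simps power2_eq_square)
  finally have h: "complex_of_real ((norm (x - scaleC t y))\<^sup>2) = of_real ((norm x)\<^sup>2) - cinner x y * cinner y x / of_real ((norm y)\<^sup>2)" .
  have "cinner x y * cinner y x = of_real ((cmod (cinner x y))\<^sup>2)"
    by (subst cinner_commute[of y x]) (rule complex_norm_square[symmetric])
  hence "complex_of_real ((norm (x - scaleC t y))\<^sup>2) = complex_of_real ((norm x)\<^sup>2 - (cmod (cinner x y))\<^sup>2 / (norm y)\<^sup>2)"
    unfolding h by simp
  hence "(norm (x - scaleC t y))\<^sup>2 = (norm x)\<^sup>2 - (cmod (cinner x y))\<^sup>2 / (norm y)\<^sup>2"
    by (simp only: of_real_eq_iff)
  hence "0 \<le> (norm x)\<^sup>2 - (cmod (cinner x y))\<^sup>2 / (norm y)\<^sup>2" by (metis zero_le_power2)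
  with ny have "(cmod (cinner x y))\<^sup>2 \<le> (norm x)\<^sup>2 * (norm y)\<^sup>2" by (simp add: field_simps)
  hence "(cmod (cinner x y))\<^sup>2 \<le> (norm x * norm y)\<^sup>2" by (metis power_mult_distrib)
  then show ?thesis by (rule power2_le_imp_le) (intro mult_nonneg_nonneg norm_ge_zero)
qed

lemma cinner_ext: "(\<And>y. cinner y x = cinner y z) \<Longrightarrow> x = (z::'a::complex_inner)"
  by (metis cinner_diff_right cinner_self_eq_0 eq_iff_diff_eq_0)

lemma Re_cinner_self: "Re (cinner x (x::'a::complex_inner)) = (norm x)\<^sup>2"
  by (simp add: cinner_norm)

lemma norm_diff_scaleC_sq:
  "(norm (w - scaleC t v))\<^sup>2 = (norm w)\<^sup>2 - 2 * Re (t * cinner w (v::'a::complex_inner)) + (cmod t)\<^sup>2 * (norm v)\<^sup>2"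
proof -
  have "(norm (w - scaleC t v))\<^sup>2 = Re (cinner (w - scaleC t v) (w - scaleC t v))"
    by (simp add: Re_cinner_self)
  also have "cinner (w - scaleC t v) (w - scaleC t v) = cinner w w - t * cinner w v - cnj (t * cinner w v) + (cnj t * t) * cinner v v"
    by (simp add: cinner_diff_left cinner_diff_right cinner_scaleC_left cinner_scaleC_right algebra_simps)
       (metis cinner_commute)
  also have "Re \<dots> = (norm w)\<^sup>2 - 2 * Re (t * cinner w v) + (cmod t)\<^sup>2 * (norm v)\<^sup>2"
  proof -
    have ct: "cnj t * t = complex_of_real ((cmod t)\<^sup>2)" by (subst complex_norm_square) (rule mult.commute)
    show ?thesis unfolding ct by (simp add: cinner_norm del: of_real_power)
  qed
  finally show ?thesis .
qed

lemma parallelogram: "(norm (a + b))\<^sup>2 + (norm (a - b))\<^sup>2 = 2 * (norm a)\<^sup>2 + 2 * (norm (b::'a::complex_inner))\<^sup>2"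
proof -
  have "complex_of_real ((norm (a + b))\<^sup>2 + (norm (a - b))\<^sup>2) = cinner (a+b) (a+b) + cinner (a-b) (a-b)"
    by (simp add: cinner_norm)
  also have "\<dots> = 2 * cinner a a + 2 * cinner b b"
    by (simp add: cinner_add_left cinner_add_right cinner_diff_left cinner_diff_right)
  also have "\<dots> = complex_of_real (2 * (norm a)\<^sup>2 + 2 * (norm b)\<^sup>2)"
    by (simp add: cinner_norm)
  finally show ?thesis by (simp only: of_real_eq_iff)
qed


section \<open>Operators\<close>

lemma clinear_add: "clinear A \<Longrightarrow> A (x + y) = A x + A y" by (simp add: clinear_def)
lemma clinear_scaleC: "clinear A \<Longrightarrow> A (scaleC c x) = scaleC c (A x)" by (simp add: clinear_def)
lemma clinear_linear: "clinear (A::'a::complex_vector\<Rightarrow>'b::complex_vector) \<Longrightarrow> linear A"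
  by (rule linearI) (simp_all add: clinear_def scaleR_scaleC)
lemma clinear_zero: "clinear A \<Longrightarrow> A 0 = 0"
  using clinear_linear linear_0 by blast
lemma clinear_diff: "clinear A \<Longrightarrow> A (x - y) = A x - A y"
  using clinear_linear linear_diff by blast
lemma clinear_sum: "clinear A \<Longrightarrow> A (sum f S) = (\<Sum>i\<in>S. A (f i))"
  using clinear_linear linear_sum by blast
lemma clinear_id: "clinear id" by (simp add: clinear_def)
lemma clinear_comp: "clinear A \<Longrightarrow> clinear B \<Longrightarrow> clinear (A \<circ> B)" by (simp add: clinear_def)
lemma clinear_pow: "clinear A \<Longrightarrow> clinear ((A::'a::complex_vector\<Rightarrow>'a) ^^ k)"
  by (induction k) (auto simp: clinear_id clinear_comp funpow.simps)

lemma cbounded_clinear: "cbounded A \<Longrightarrow> clinear A" by (simp add: cbounded_def)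
lemma cbounded_bound: "cbounded A \<Longrightarrow> \<exists>K\<ge>0. \<forall>x. norm (A x) \<le> K * norm x"
  unfolding cbounded_def
  by (metis mult.commute norm_ge_zero order.trans mult_left_mono max.cobounded1 max.cobounded2)
lemma cboundedI: "clinear A \<Longrightarrow> (\<And>x. norm (A x) \<le> K * norm x) \<Longrightarrow> cbounded A"
  by (auto simp: cbounded_def mult.commute)
lemma cbounded_bounded_linear: assumes "cbounded A" shows "bounded_linear A"
proof -
  have l: "linear A" using assms cbounded_clinear clinear_linear by blast
  obtain K where K: "\<And>x. norm (A x) \<le> K * norm x" using cbounded_bound[OF assms] by blast
  show ?thesis using l K by (intro bounded_linear_intro[where K=K]) (auto simp: linear_add linear_scale mult.commute)
qed
lemma cbounded_id: "cbounded id" by (rule cboundedI[of _ 1]) (auto simp: clinear_id)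
lemma cbounded_comp: assumes "cbounded A" "cbounded B" shows "cbounded (A \<circ> B)"
proof -
  obtain K where K: "K \<ge> 0" "\<And>x. norm (A x) \<le> K * norm x" using cbounded_bound[OF assms(1)] by blast
  obtain L where L: "L \<ge> 0" "\<And>x. norm (B x) \<le> L * norm x" using cbounded_bound[OF assms(2)] by blast
  have "norm (A (B x)) \<le> (K * L) * norm x" for x
    using K(2)[of "B x"] L(2)[of x] K(1) by (metis mult.assoc mult_left_mono order.trans)
  then show ?thesis using assms by (intro cboundedI[of _ "K*L"]) (auto simp: cbounded_clinear clinear_comp)
qed
lemma cbounded_pow: "cbounded A \<Longrightarrow> cbounded ((A::'a::complex_inner\<Rightarrow>'a) ^^ k)"
  by (induction k) (auto simp: cbounded_id cbounded_comp funpow.simps)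

lemma cbounded_continuous: "cbounded A \<Longrightarrow> continuous_on S A"
  using cbounded_bounded_linear linear_continuous_on by blast

section \<open>Riesz representation\<close>

lemma riesz:
  fixes f :: "'a::chilbert \<Rightarrow> complex"
  assumes add: "\<And>x y. f (x + y) = f x + f y" and sc: "\<And>c x. f (scaleC c x) = c * f x"
    and bd: "\<And>x. cmod (f x) \<le> K * norm x"
  shows "\<exists>z. \<forall>x. f x = cinner z x"
proof (cases "\<forall>x. f x = 0")
  case True then show ?thesis by (intro exI[of _ 0]) simp
next
  case False
  then obtain u where fu: "f u \<noteq> 0" by blast
  have lin: "linear f" by (rule linearI) (simp_all add: add sc scaleR_scaleC scaleR_conv_of_real)
  have f0: "f 0 = 0" using linear_0[OF lin] .
  have fdiff: "f (x - y) = f x - f y" for x y using linear_diff[OF lin] .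
  have bl: "bounded_linear f" using lin bd by (intro bounded_linear_intro[where K=K]) (auto simp: linear_add linear_scale mult.commute)
  define M where "M = {x. f x = 0}"
  have M0: "0 \<in> M" by (simp add: M_def f0)
  define D where "D = (\<lambda>m. norm (u - m)) ` M"
  define d where "d = Inf D"
  have Dne: "D \<noteq> {}" using M0 by (auto simp: D_def)
  have Dbd: "bdd_below D" by (auto simp: D_def intro!: bdd_belowI[of _ 0])
  have dle: "d \<le> norm (u - m)" if "m \<in> M" for m
    unfolding d_def D_def using Dbd that by (auto simp: D_def intro!: cInf_lower)
  have d0: "d \<ge> 0" unfolding d_def using Dne by (auto simp: D_def intro!: cInf_greatest)
  have "\<exists>m\<in>M. (norm (u - m))\<^sup>2 < d\<^sup>2 + 1 / (real n + 1)" for n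
  proof -
    have "d\<^sup>2 < d\<^sup>2 + 1 / (real n + 1)" by simp
    hence "sqrt (d\<^sup>2) < sqrt (d\<^sup>2 + 1 / (real n + 1))" by (rule real_sqrt_less_mono)
    hence "d < sqrt (d\<^sup>2 + 1 / (real n + 1))" using d0 by simp
    then obtain e where "e \<in> D" "e < sqrt (d\<^sup>2 + 1 / (real n + 1))"
      using cInf_lessD[OF Dne] unfolding d_def by blast
    then obtain m where m: "m \<in> M" "norm (u - m) < sqrt (d\<^sup>2 + 1 / (real n + 1))" by (auto simp: D_def)
    have "(norm (u - m))\<^sup>2 < (sqrt (d\<^sup>2 + 1 / (real n + 1)))\<^sup>2"
      by (rule power_strict_mono[OF m(2)]) auto
    also have "\<dots> = d\<^sup>2 + 1 / (real n + 1)" by (simp add: add_nonneg_nonneg)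
    finally show ?thesis using m(1) by blast
  qed
  then obtain ms where ms: "\<And>n. ms n \<in> M" "\<And>n. (norm (u - ms n))\<^sup>2 < d\<^sup>2 + 1 / (real n + 1)"
    by metis
  have pd: "(norm (ms p - ms q))\<^sup>2 \<le> 2 / (real p + 1) + 2 / (real q + 1)" for p q
  proof -
    have mid: "scaleR (1/2) (ms p + ms q) \<in> M"
      using ms(1)[of p] ms(1)[of q] by (simp add: M_def linear_scale[OF lin] add)
    have "(norm ((u - ms p) + (u - ms q)))\<^sup>2 = 4 * (norm (u - scaleR (1/2) (ms p + ms q)))\<^sup>2"
    proof -
      have "(u - ms p) + (u - ms q) = scaleR 2 (u - scaleR (1/2) (ms p + ms q))"
        by (simp add: algebra_simps scaleR_2)
      then show ?thesis by (simp add: power_mult_distrib)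
    qed
    also have "\<dots> \<ge> 4 * d\<^sup>2" using dle[OF mid] d0 by (simp add: power_mono)
    finally have a: "(norm ((u - ms p) + (u - ms q)))\<^sup>2 \<ge> 4 * d\<^sup>2" .
    have "(u - ms p) - (u - ms q) = ms q - ms p" by simp
    hence b: "(norm (ms p - ms q))\<^sup>2 = (norm ((u - ms p) - (u - ms q)))\<^sup>2" by (simp add: norm_minus_commute)
    show ?thesis using parallelogram[of "u - ms p" "u - ms q"] a b ms(2)[of p] ms(2)[of q] by linarith
  qed
  have "Cauchy ms"
  proof (rule metric_CauchyI)
    fix e :: real assume e: "e > 0"
    obtain N :: nat where N: "4 / e\<^sup>2 < real N" using reals_Archimedean2 by blast
    show "\<exists>M. \<forall>m\<ge>M. \<forall>n\<ge>M. dist (ms m) (ms n) < e"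
    proof (intro exI allI impI)
      fix p q assume pq: "N \<le> p" "N \<le> q"
      have "2 / (real p + 1) \<le> 2 / (real N + 1)"
        by (rule divide_left_mono) (use pq in auto)
      moreover have "2 / (real q + 1) \<le> 2 / (real N + 1)"
        by (rule divide_left_mono) (use pq in auto)
      moreover have "4 / (real N + 1) < e\<^sup>2"
      proof -
        have "4 / e\<^sup>2 < real N + 1" using N by linarith
        hence "4 < (real N + 1) * e\<^sup>2" using e by (simp add: divide_less_eq)
        thus ?thesis by (simp add: divide_less_eq mult.commute)
      qed
      ultimately have "(norm (ms p - ms q))\<^sup>2 < e\<^sup>2" using pd[of p q] by linarith
      then show "dist (ms p) (ms q) < e" using e by (simp add: dist_norm power_less_imp_less_base)
    qed
  qed
  then obtain m where lim: "ms \<longlonglongrightarrow> m" using Cauchy_convergent_iff convergent_def by blast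
  have mM: "m \<in> M"
  proof -
    have "(\<lambda>n. f (ms n)) \<longlonglongrightarrow> f m" using bounded_linear.tendsto[OF bl lim] .
    moreover have "(\<lambda>n. f (ms n)) = (\<lambda>n. 0)" using ms(1) by (auto simp: M_def)
    ultimately show ?thesis by (simp add: M_def LIMSEQ_const_iff)
  qed
  define w where "w = u - m"
  have wle: "(norm w)\<^sup>2 \<le> d\<^sup>2"
  proof (rule LIMSEQ_le)
    show "(\<lambda>n. (norm (u - ms n))\<^sup>2) \<longlonglongrightarrow> (norm w)\<^sup>2"
      unfolding w_def by (intro tendsto_intros lim)
    show "(\<lambda>n. d\<^sup>2 + 1 / (real n + 1)) \<longlonglongrightarrow> d\<^sup>2"
      using LIMSEQ_inverse_real_of_nat_add[of "d\<^sup>2"]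
      by (simp add: inverse_eq_divide add.commute)
    show "\<exists>N. \<forall>n\<ge>N. (norm (u - ms n))\<^sup>2 \<le> d\<^sup>2 + 1 / (real n + 1)"
      using ms(2) less_imp_le by blast
  qed
  have orth: "cinner w v = 0" if vM: "v \<in> M" for v
  proof (rule ccontr)
    assume c0: "cinner w v \<noteq> 0"
    define c where "c = cinner w v"
    define s where "s = 1 / ((norm v)\<^sup>2 + 1)"
    have s0: "s > 0" unfolding s_def by (simp add: add_nonneg_pos)
    have sv: "s * (norm v)\<^sup>2 < 1" unfolding s_def by (simp add: add_nonneg_pos divide_less_eq)
    define t where "t = complex_of_real s * cnj c"
    have "m + scaleC t v \<in> M" using mM vM by (simp add: M_def add sc)
    hence "d \<le> norm (u - (m + scaleC t v))" by (rule dle)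
    hence "d\<^sup>2 \<le> (norm (w - scaleC t v))\<^sup>2" using d0 by (simp add: w_def diff_diff_add power_mono)
    also have "\<dots> = (norm w)\<^sup>2 - 2 * s * (cmod c)\<^sup>2 + s\<^sup>2 * (cmod c)\<^sup>2 * (norm v)\<^sup>2"
    proof -
      have cc: "cnj c * c = complex_of_real ((cmod c)\<^sup>2)" by (subst complex_norm_square) (rule mult.commute)
      have "t * cinner w v = complex_of_real (s * (cmod c)\<^sup>2)"
        unfolding t_def c_def[symmetric] by (simp only: mult.assoc cc of_real_mult)
      moreover have "cmod t = s * cmod c" using s0 by (simp add: t_def norm_mult)
      ultimately show ?thesis by (simp add: norm_diff_scaleC_sq power_mult_distrib)
    qed
    finally have "2 * s * (cmod c)\<^sup>2 \<le> s * (cmod c)\<^sup>2 * (s * (norm v)\<^sup>2)"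
      using wle by (simp add: power2_eq_square algebra_simps)
    moreover have "s * (cmod c)\<^sup>2 > 0" using s0 c0 by (simp add: c_def)
    ultimately show False using sv
    proof -
      assume h1: "2 * s * (cmod c)\<^sup>2 \<le> s * (cmod c)\<^sup>2 * (s * (norm v)\<^sup>2)"
        and h2: "s * (cmod c)\<^sup>2 > 0" and h3: "s * (norm v)\<^sup>2 < 1"
      have "s * (cmod c)\<^sup>2 * (s * (norm v)\<^sup>2) < s * (cmod c)\<^sup>2 * 1"
        by (rule mult_strict_left_mono[OF h3 h2])
      moreover have "2 * s * (cmod c)\<^sup>2 = 2 * (s * (cmod c)\<^sup>2)" by simp
      ultimately show False using h1 h2 by linarith
    qed
  qed
  have fw: "f w = f u" using mM by (simp add: w_def fdiff M_def)
  hence w0: "w \<noteq> 0" using fu f0 by auto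
  define z where "z = scaleC (cnj (f w) / of_real ((norm w)\<^sup>2)) w"
  have "f x = cinner z x" for x
  proof -
    have "x - scaleC (f x / f w) w \<in> M" using fu fw by (simp add: M_def fdiff sc)
    hence "cinner w (x - scaleC (f x / f w) w) = 0" by (rule orth)
    hence "cinner w x = f x / f w * of_real ((norm w)\<^sup>2)"
      by (simp add: cinner_diff_right cinner_scaleC_right cinner_norm)
    then show ?thesis using fu fw w0 by (simp add: z_def cinner_scaleC_left)
  qed
  then show ?thesis by blast
qed

definition is_adj :: "('a::complex_inner \<Rightarrow> 'b::complex_inner) \<Rightarrow> ('b \<Rightarrow> 'a) \<Rightarrow> bool" where
  "is_adj A B \<longleftrightarrow> (\<forall>x y. cinner (A x) y = cinner x (B y))"

lemma is_adjD: "is_adj A B \<Longrightarrow> cinner (A x) y = cinner x (B y)" by (simp add: is_adj_def)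

lemma is_adj_sym: "is_adj A B \<Longrightarrow> is_adj B A"
  unfolding is_adj_def by (metis cinner_commute)

lemma is_adj_unique: "is_adj A B \<Longrightarrow> is_adj A B' \<Longrightarrow> B = B'"
  unfolding is_adj_def by (intro ext cinner_ext) metis

lemma adjoint_exists:
  fixes A :: "'a::chilbert \<Rightarrow> 'b::chilbert"
  assumes "cbounded A" shows "\<exists>B. is_adj A B"
proof -
  obtain K where K: "K \<ge> 0" "\<And>x. norm (A x) \<le> K * norm x" using cbounded_bound[OF assms] by blast
  have cl: "clinear A" using assms by (rule cbounded_clinear)
  have "\<exists>z. \<forall>x. cinner y (A x) = cinner z x" for y
  proof (rule riesz[where K="norm y * K"])
    show "cinner y (A (x + x')) = cinner y (A x) + cinner y (A x')" for x x'
      by (simp add: clinear_add[OF cl] cinner_add_right)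
    show "cinner y (A (scaleC c x)) = c * cinner y (A x)" for c x
      by (simp add: clinear_scaleC[OF cl] cinner_scaleC_right)
    show "cmod (cinner y (A x)) \<le> norm y * K * norm x" for x
    proof -
      have "norm y * norm (A x) \<le> norm y * (K * norm x)" by (rule mult_left_mono[OF K(2)]) simp
      then show ?thesis using cauchy_schwarz[of y "A x"] by (simp add: mult.assoc)
    qed
  qed
  then obtain B where B: "\<And>y x. cinner y (A x) = cinner (B y) x" by metis
  have "is_adj A B" unfolding is_adj_def
  proof (intro allI)
    fix x y show "cinner (A x) y = cinner x (B y)"
      by (subst cinner_commute, subst B, subst cinner_commute) simp
  qed
  then show ?thesis by blast
qed

lemma cadjoint_adj: "cbounded (A::'a::chilbert \<Rightarrow> 'b::chilbert) \<Longrightarrow> is_adj A (cadjoint A)"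
  unfolding cadjoint_def using adjoint_exists[of A] unfolding is_adj_def by (rule someI_ex) (simp add: is_adj_def)

lemma cadjoint_eq: "cbounded (A::'a::chilbert \<Rightarrow> 'b::chilbert) \<Longrightarrow> is_adj A B \<Longrightarrow> cadjoint A = B"
  using cadjoint_adj is_adj_unique by blast

lemma is_adj_clinear: assumes "is_adj A B" shows "clinear B"
  unfolding clinear_def
proof (intro conjI allI)
  fix x y show "B (x + y) = B x + B y"
  proof (rule cinner_ext)
    fix z
    have "cinner z (B (x + y)) = cinner (A z) (x + y)" by (rule is_adjD[OF assms, symmetric])
    also have "\<dots> = cinner (A z) x + cinner (A z) y" by (rule cinner_add_right)
    also have "\<dots> = cinner z (B x + B y)" by (simp only: is_adjD[OF assms] cinner_add_right)
    finally show "cinner z (B (x + y)) = cinner z (B x + B y)" .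
  qed
next
  fix c x show "B (scaleC c x) = scaleC c (B x)"
  proof (rule cinner_ext)
    fix z
    have "cinner z (B (scaleC c x)) = cinner (A z) (scaleC c x)" by (rule is_adjD[OF assms, symmetric])
    also have "\<dots> = c * cinner (A z) x" by (rule cinner_scaleC_right)
    also have "\<dots> = cinner z (scaleC c (B x))" by (simp only: is_adjD[OF assms] cinner_scaleC_right)
    finally show "cinner z (B (scaleC c x)) = cinner z (scaleC c (B x))" .
  qed
qed

lemma is_adj_cbounded: assumes "is_adj A B" "cbounded A" shows "cbounded B"
proof -
  obtain K where K: "K \<ge> 0" "\<And>x. norm (A x) \<le> K * norm x" using cbounded_bound[OF assms(2)] by blast
  have "norm (B y) \<le> K * norm y" for y
  proof -
    have "(norm (B y))\<^sup>2 = Re (cinner (B y) (B y))" by (simp add: Re_cinner_self)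
    also have "cinner (B y) (B y) = cinner (A (B y)) y"
      using assms(1) is_adj_def by (metis cinner_commute is_adj_sym)
    also have "Re \<dots> \<le> cmod (cinner (A (B y)) y)" by (rule complex_Re_le_cmod)
    also have "\<dots> \<le> norm (A (B y)) * norm y" by (rule cauchy_schwarz)
    also have "\<dots> \<le> K * norm (B y) * norm y" using K(2)[of "B y"] by (simp add: mult_right_mono)
    finally have *: "norm (B y) * norm (B y) \<le> norm (B y) * (K * norm y)" by (simp add: power2_eq_square algebra_simps)
    show ?thesis
    proof (cases "B y = 0")
      case True then show ?thesis using K by simp
    next
      case False then show ?thesis using * by simp
    qed
  qed
  then show ?thesis using is_adj_clinear[OF assms(1)] by (rule cboundedI[rotated])
qed

lemma is_adj_comp: "is_adj A A' \<Longrightarrow> is_adj B B' \<Longrightarrow> is_adj (A \<circ> B) (B' \<circ> A')"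
  by (simp add: is_adj_def)

lemma is_adj_id: "is_adj id id" by (simp add: is_adj_def)

lemma is_adj_pow: "is_adj A A' \<Longrightarrow> is_adj ((A::'a::complex_inner \<Rightarrow> 'a) ^^ k) (A' ^^ k)"
proof (induction k)
  case 0 then show ?case by (simp add: is_adj_def)
next
  case (Suc k)
  have "is_adj (A \<circ> A ^^ k) (A' ^^ k \<circ> A')" using Suc by (intro is_adj_comp) auto
  moreover have "A' ^^ k \<circ> A' = A' \<circ> A' ^^ k" by (metis funpow_Suc_right funpow.simps(2))
  ultimately show ?case by (simp only: funpow.simps(2))
qed

lemma is_adj_lincomb:
  assumes "\<And>i. i \<in> S \<Longrightarrow> is_adj (A i) (A' i)"
  shows "is_adj (\<lambda>x. \<Sum>i\<in>S. scaleC (c i) (A i x)) (\<lambda>y. \<Sum>i\<in>S. scaleC (cnj (c i)) (A' i y))"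
  using assms by (simp add: is_adj_def cinner_sum_left cinner_sum_right cinner_scaleC_left cinner_scaleC_right)

lemma nat_summable_infsum:
  fixes f :: "nat \<Rightarrow> 'b::banach"
  assumes "summable (\<lambda>n. norm (f n))"
  shows "f summable_on UNIV" "infsum f UNIV = suminf f"
proof -
  have s: "summable f" using assms summable_norm_cancel by blast
  have "(f has_sum suminf f) UNIV" using norm_summable_imp_has_sum[OF assms] s summable_sums by blast
  then show "f summable_on UNIV" "infsum f UNIV = suminf f"
    by (auto simp: summable_on_def infsumI)
qed

lemma double_series:
  fixes w :: "nat \<Rightarrow> nat \<Rightarrow> 'b::banach"
  assumes bnd: "\<And>k m. norm (w k m) \<le> g k * h m"
    and g0: "\<And>k. g k \<ge> 0" and h0: "\<And>m. h m \<ge> 0"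
    and sg: "summable g" and sh: "summable h"
  shows "\<exists>S. (\<lambda>k. suminf (w k)) sums S \<and> (\<lambda>n. \<Sum>k\<le>n. w k (n - k)) sums S"
proof -
  define G where "G = (\<lambda>(k::nat, m::nat). g k * h m)"
  have Gk: "(\<lambda>m. norm (G (k, m))) summable_on UNIV" for k
  proof -
    have "summable (\<lambda>m. norm (norm (G (k, m))))"
      using summable_mult[OF sh, of "g k"] g0 h0 by (simp add: G_def abs_mult)
    then show ?thesis by (rule nat_summable_infsum(1))
  qed
  have Gk2: "infsum (\<lambda>m. norm (G (k, m))) UNIV = g k * suminf h" for k
  proof -
    have "summable (\<lambda>m. norm (norm (G (k, m))))"
      using summable_mult[OF sh, of "g k"] g0 h0 by (simp add: G_def abs_mult)
    then have "infsum (\<lambda>m. norm (G (k, m))) UNIV = suminf (\<lambda>m. norm (G (k, m)))"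
      by (rule nat_summable_infsum(2))
    also have "\<dots> = suminf (\<lambda>m. g k * h m)" using g0 h0 by (simp add: G_def abs_mult)
    also have "\<dots> = g k * suminf h" using suminf_mult[OF sh] by simp
    finally show ?thesis .
  qed
  have "(\<lambda>k. norm (infsum (\<lambda>m. norm (G (k, m))) UNIV)) summable_on UNIV"
  proof -
    have "summable (\<lambda>k. norm (norm (g k * suminf h)))"
      using summable_mult2[OF sg, of "suminf h"] g0 suminf_nonneg[OF sh h0] by (simp add: abs_mult)
    then show ?thesis unfolding Gk2 by (rule nat_summable_infsum(1))
  qed
  hence "(\<lambda>x. norm (G x)) summable_on UNIV \<times> UNIV"
    using Infinite_Sum.abs_summable_on_Sigma_iff[where f=G and A=UNIV and B="\<lambda>_. UNIV"] Gk by auto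
  hence wabs: "(\<lambda>x. norm ((\<lambda>(k,m). w k m) x)) summable_on UNIV \<times> UNIV"
    by (rule Infinite_Sum.abs_summable_on_comparison_test) (use bnd g0 h0 in \<open>auto simp: G_def\<close>)
  hence wsum: "(\<lambda>(k,m). w k m) summable_on UNIV \<times> UNIV" by (rule Infinite_Sum.abs_summable_summable)
  define S where "S = infsum (\<lambda>(k,m). w k m) (UNIV \<times> UNIV)"
  have wk: "infsum (w k) UNIV = suminf (w k)" for k
  proof (rule nat_summable_infsum(2))
    show "summable (\<lambda>m. norm (w k m))"
      by (rule summable_comparison_test[OF _ summable_mult[OF sh, of "g k"]]) (use bnd in auto)
  qed
  have 1: "(\<lambda>k. suminf (w k)) sums S"
  proof -
    have "(\<lambda>k. infsum (w k) UNIV) summable_on UNIV"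
      using summable_on_Sigma_banach[of w UNIV "\<lambda>_. UNIV"] wsum by simp
    moreover have "infsum (\<lambda>k. infsum (w k) UNIV) UNIV = S"
      unfolding S_def using infsum_Sigma'_banach[of w UNIV "\<lambda>_. UNIV"] wsum by simp
    ultimately have "((\<lambda>k. infsum (w k) UNIV) has_sum S) UNIV"
      by (metis summable_iff_has_sum_infsum)
    then show ?thesis unfolding wk by (rule has_sum_imp_sums)
  qed
  define T where "T = Sigma (UNIV::nat set) (\<lambda>n. {..n})"
  define ii where "ii = (\<lambda>(n::nat, k::nat). (k, n - k))"
  define jj where "jj = (\<lambda>(k::nat, m::nat). (k + m, k))"
  have reidx1: "(\<lambda>(n,k). w k (n - k)) summable_on T \<longleftrightarrow> (\<lambda>(k,m). w k m) summable_on UNIV \<times> UNIV"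
    by (rule summable_on_reindex_bij_witness[where i=ii and j=jj, symmetric])
       (auto simp: ii_def jj_def T_def)
  have reidx2: "infsum (\<lambda>(n,k). w k (n - k)) T = S"
    unfolding S_def
    by (rule infsum_reindex_bij_witness[where i=ii and j=jj, symmetric])
       (auto simp: ii_def jj_def T_def)
  have Tsum: "(\<lambda>(n,k). w k (n - k)) summable_on T" using reidx1 wsum by simp
  have 2: "(\<lambda>n. \<Sum>k\<le>n. w k (n - k)) sums S"
  proof -
    have "(\<lambda>n. infsum (\<lambda>k. w k (n - k)) {..n}) summable_on UNIV"
      using summable_on_Sigma_banach[of "\<lambda>n k. w k (n - k)" UNIV "\<lambda>n. {..n}"] Tsum by (simp add: T_def)
    moreover have "infsum (\<lambda>n. infsum (\<lambda>k. w k (n - k)) {..n}) UNIV = S"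
      using infsum_Sigma'_banach[of "\<lambda>n k. w k (n - k)" UNIV "\<lambda>n. {..n}"] Tsum reidx2 by (simp add: T_def)
    ultimately have "((\<lambda>n. infsum (\<lambda>k. w k (n - k)) {..n}) has_sum S) UNIV"
      by (metis summable_iff_has_sum_infsum)
    then show ?thesis by (simp add: has_sum_imp_sums)
  qed
  from 1 2 show ?thesis by blast
qed

lemma norm_scaleC: "norm (scaleC c (x::'a::complex_inner)) = cmod c * norm x"
proof -
  have "(norm (scaleC c x))\<^sup>2 = Re (cinner (scaleC c x) (scaleC c x))" by (simp add: Re_cinner_self)
  also have "cinner (scaleC c x) (scaleC c x) = (cnj c * c) * cinner x x"
    by (simp add: cinner_scaleC_left cinner_scaleC_right mult.assoc)
  also have "cnj c * c = complex_of_real ((cmod c)\<^sup>2)" by (subst complex_norm_square) (rule mult.commute)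
  also have "Re (complex_of_real ((cmod c)\<^sup>2) * cinner x x) = (cmod c * norm x)\<^sup>2"
    by (simp add: cinner_norm power_mult_distrib del: of_real_power)
  finally show ?thesis by (simp add: power2_eq_iff_nonneg)
qed

lemma bl_scaleC: "bounded_linear (\<lambda>x::'a::complex_inner. scaleC c x)"
  by (rule bounded_linear_intro[where K="cmod c"])
     (simp_all add: scaleC_add_right scaleR_scaleC scaleC_scaleC mult.commute norm_scaleC)

lemma bl_cinner_right: "bounded_linear (\<lambda>x::'a::complex_inner. cinner y x)"
proof (rule bounded_linear_intro[where K="norm y"])
  show "cmod (cinner y x) \<le> norm x * norm y" for x
    using cauchy_schwarz[of y x] by (simp only: mult.commute)
qed (simp_all add: cinner_add_right cinner_scaleR_right scaleR_conv_of_real)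

lemma bl_cinner_left: "bounded_linear (\<lambda>x::'a::complex_inner. cinner x y)"
  by (rule bounded_linear_intro[where K="norm y"])
     (simp_all add: cinner_add_left cinner_scaleR_left scaleR_conv_of_real cauchy_schwarz)

lemma pow_bound:
  assumes "\<And>x. norm (B x) \<le> K * norm x" "K \<ge> 0"
  shows "norm (((B::'a::real_normed_vector \<Rightarrow> 'a) ^^ k) x) \<le> K ^ k * norm x"
proof (induction k)
  case 0 then show ?case by simp
next
  case (Suc k)
  have "norm ((B ^^ Suc k) x) = norm (B ((B ^^ k) x))" by simp
  also have "\<dots> \<le> K * norm ((B ^^ k) x)" by (rule assms(1))
  also have "\<dots> \<le> K * (K ^ k * norm x)" by (rule mult_left_mono[OF Suc assms(2)])
  finally show ?case by (simp add: mult.assoc)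
qed

definition eterm :: "complex \<Rightarrow> ('a::complex_inner \<Rightarrow> 'a) \<Rightarrow> 'a \<Rightarrow> nat \<Rightarrow> 'a" where
  "eterm a B x k = scaleC (a ^ k / fact k) ((B ^^ k) x)"

definition expo :: "complex \<Rightarrow> ('a::complex_inner \<Rightarrow> 'a) \<Rightarrow> 'a \<Rightarrow> 'a" where
  "expo a B x = suminf (eterm a B x)"

lemma eterm_bound:
  assumes "\<And>x. norm (B x) \<le> K * norm x" "K \<ge> 0"
  shows "norm (eterm a B x k) \<le> (cmod a * K) ^ k / fact k * norm x"
proof -
  have "norm (eterm a B x k) = cmod a ^ k / fact k * norm ((B ^^ k) x)"
    by (simp add: eterm_def norm_scaleC norm_divide norm_power)
  also have "\<dots> \<le> cmod a ^ k / fact k * (K ^ k * norm x)"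
    by (rule mult_left_mono[OF pow_bound[OF assms]]) simp
  finally show ?thesis by (simp add: power_mult_distrib)
qed

lemma exp_series_summable: "summable (\<lambda>k. (r::real) ^ k / fact k * c)"
  using summable_mult2[OF summable_exp[of r], of c] by (simp add: field_simps)

lemma eterm_summable:
  assumes "cbounded B"
  shows "summable (\<lambda>k. norm (eterm a B x k))"
proof -
  obtain K where K: "K \<ge> 0" "\<And>x. norm (B x) \<le> K * norm x" using cbounded_bound[OF assms] by blast
  show ?thesis
    by (rule summable_comparison_test[OF _ exp_series_summable[of "cmod a * K" "norm x"]])
       (use eterm_bound[OF K(2) K(1)] in auto)
qed

lemma eterm_summable': fixes B :: "'a::chilbert \<Rightarrow> 'a"
  assumes "cbounded B" shows "summable (eterm a B x)"
  by (rule summable_norm_cancel[of "eterm a B x", OF eterm_summable[OF assms]])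

lemma expo_sums: fixes B :: "'a::chilbert \<Rightarrow> 'a"
  assumes "cbounded B" shows "eterm a B x sums expo a B x"
  unfolding expo_def by (rule summable_sums[OF eterm_summable'[OF assms]])

lemma expo_cbounded:
  fixes B :: "'a::chilbert \<Rightarrow> 'a"
  assumes "cbounded B" shows "cbounded (expo a B)"
proof -
  obtain K where K: "K \<ge> 0" "\<And>x. norm (B x) \<le> K * norm x" using cbounded_bound[OF assms] by blast
  have cl: "clinear (B ^^ k)" for k using clinear_pow[OF cbounded_clinear[OF assms]] .
  have lin: "clinear (expo a B)"
    unfolding clinear_def
  proof (intro conjI allI)
    fix x y
    have eq: "eterm a B (x + y) = (\<lambda>k. eterm a B x k + eterm a B y k)"
      by (auto simp: eterm_def clinear_add[OF cl] scaleC_add_right)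
    have "(\<lambda>k. eterm a B x k + eterm a B y k) sums (expo a B x + expo a B y)"
      by (rule sums_add[OF expo_sums[OF assms] expo_sums[OF assms]])
    hence "eterm a B (x + y) sums (expo a B x + expo a B y)" by (simp only: eq)
    then show "expo a B (x + y) = expo a B x + expo a B y"
      by (rule sums_unique2[OF expo_sums[OF assms]])
  next
    fix c x
    have "eterm a B (scaleC c x) = (\<lambda>k. scaleC c (eterm a B x k))"
      by (auto simp: eterm_def clinear_scaleC[OF cl] scaleC_scaleC mult.commute)
    moreover have "(\<lambda>k. scaleC c (eterm a B x k)) sums scaleC c (expo a B x)"
      by (rule bounded_linear.sums[OF bl_scaleC expo_sums[OF assms]])
    ultimately have "eterm a B (scaleC c x) sums scaleC c (expo a B x)" by simp
    then show "expo a B (scaleC c x) = scaleC c (expo a B x)"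
      by (rule sums_unique2[OF expo_sums[OF assms]])
  qed
  have "norm (expo a B x) \<le> exp (cmod a * K) * norm x" for x
  proof -
    have "norm (expo a B x) \<le> (\<Sum>k. norm (eterm a B x k))"
      unfolding expo_def by (rule summable_norm[OF eterm_summable[OF assms]])
    also have "\<dots> \<le> (\<Sum>k. (cmod a * K) ^ k / fact k * norm x)"
      by (rule suminf_le[OF eterm_bound[OF K(2) K(1)] eterm_summable[OF assms] exp_series_summable])
    also have "\<dots> = exp (cmod a * K) * norm x"
    proof -
      have "(\<lambda>k. (cmod a * K) ^ k / fact k * norm x) sums (exp (cmod a * K) * norm x)"
        using sums_mult2[OF exp_converges[of "cmod a * K"], of "norm x"]
        by (simp add: field_simps)
      then show ?thesis by (rule sums_unique[symmetric])
    qed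
    finally show ?thesis .
  qed
  then show ?thesis using lin by (intro cboundedI)
qed

lemma expo_commute:
  fixes B :: "'a::chilbert \<Rightarrow> 'a"
  assumes "cbounded B" "cbounded C" "C \<circ> B = B \<circ> C"
  shows "C (expo a B x) = expo a B (C x)"
proof -
  have pc: "C ((B ^^ k) y) = (B ^^ k) (C y)" for k y
  proof (induction k arbitrary: y)
    case 0 then show ?case by simp
  next
    case (Suc k) then show ?case using assms(3) by (simp add: fun_eq_iff)
  qed
  have "(\<lambda>k. C (eterm a B x k)) sums C (expo a B x)"
    by (rule bounded_linear.sums[OF cbounded_bounded_linear[OF assms(2)] expo_sums[OF assms(1)]])
  moreover have "(\<lambda>k. C (eterm a B x k)) = eterm a B (C x)"
    by (auto simp: eterm_def clinear_scaleC[OF cbounded_clinear[OF assms(2)]] pc)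
  ultimately have "eterm a B (C x) sums C (expo a B x)" by simp
  then show ?thesis by (rule sums_unique2[OF expo_sums[OF assms(1)], symmetric])
qed

lemma expo_zero: fixes B :: "'a::chilbert \<Rightarrow> 'a" shows "cbounded B \<Longrightarrow> expo 0 B x = x"
proof -
  assume "cbounded B"
  have "eterm 0 B x = (\<lambda>k. if k = 0 then x else 0)"
    by (auto simp: eterm_def fun_eq_iff scaleC_one zero_power)
  moreover have "(\<lambda>k. if k = 0 then x else 0) sums x" using sums_single[of 0 "\<lambda>_. x"] by simp
  ultimately show ?thesis unfolding expo_def by (simp add: sums_iff)
qed

lemma expo_adj:
  fixes B :: "'a::chilbert \<Rightarrow> 'a"
  assumes "cbounded B" "is_adj B B'"
  shows "is_adj (expo a B) (expo (cnj a) B')"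
proof -
  have B'b: "cbounded B'" using is_adj_cbounded[OF assms(2,1)] .
  have "cinner (expo a B x) y = cinner x (expo (cnj a) B' y)" for x y
  proof -
    have "(\<lambda>k. cinner (eterm a B x k) y) sums cinner (expo a B x) y"
      by (rule bounded_linear.sums[OF bl_cinner_left expo_sums[OF assms(1)]])
    moreover have "(\<lambda>k. cinner x (eterm (cnj a) B' y k)) sums cinner x (expo (cnj a) B' y)"
      by (rule bounded_linear.sums[OF bl_cinner_right expo_sums[OF B'b]])
    moreover have "cinner (eterm a B x k) y = cinner x (eterm (cnj a) B' y k)" for k
      using is_adjD[OF is_adj_pow[OF assms(2), of k]]
      by (simp add: eterm_def cinner_scaleC_left cinner_scaleC_right)
    ultimately show ?thesis by (metis (no_types, lifting) sums_unique2 sums_cong)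
  qed
  then show ?thesis by (simp add: is_adj_def)
qed

lemma binom_coeff:
  "((a::complex) + b) ^ n / fact n = (\<Sum>k\<le>n. a ^ k / fact k * (b ^ (n - k) / fact (n - k)))"
proof -
  have "(a + b) ^ n / fact n = (\<Sum>k\<le>n. of_nat (n choose k) * a ^ k * b ^ (n - k)) / fact n"
    by (simp add: binomial_ring)
  also have "\<dots> = (\<Sum>k\<le>n. of_nat (n choose k) * a ^ k * b ^ (n - k) / fact n)"
    by (simp add: sum_divide_distrib)
  also have "\<dots> = (\<Sum>k\<le>n. a ^ k / fact k * (b ^ (n - k) / fact (n - k)))"
  proof (rule sum.cong[OF refl])
    fix k assume "k \<in> {..n}"
    hence kn: "k \<le> n" by simp
    show "of_nat (n choose k) * a ^ k * b ^ (n - k) / fact n = a ^ k / fact k * (b ^ (n - k) / fact (n - k))"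
      by (simp add: binomial_fact[OF kn] field_simps)
  qed
  finally show ?thesis .
qed

lemma expo_add:
  fixes B :: "'a::chilbert \<Rightarrow> 'a"
  assumes bB: "cbounded B"
  shows "expo a B (expo b B x) = expo (a + b) B x"
proof -
  obtain K where K: "K \<ge> 0" "\<And>x. norm (B x) \<le> K * norm x" using cbounded_bound[OF bB] by blast
  define w where "w = (\<lambda>k m. scaleC (a ^ k / fact k * (b ^ m / fact m)) ((B ^^ (k + m)) x))"
  define g where "g = (\<lambda>k. (cmod a * K) ^ k / fact k)"
  define h where "h = (\<lambda>m. (cmod b * K) ^ m / fact m * norm x)"
  have bnd: "norm (w k m) \<le> g k * h m" for k m
  proof -
    have "norm (w k m) = cmod a ^ k / fact k * (cmod b ^ m / fact m) * norm ((B ^^ (k + m)) x)"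
      by (simp add: w_def norm_scaleC norm_mult norm_divide norm_power)
    also have "\<dots> \<le> cmod a ^ k / fact k * (cmod b ^ m / fact m) * (K ^ (k + m) * norm x)"
      by (rule mult_left_mono[OF pow_bound[OF K(2) K(1)]]) simp
    also have "\<dots> = g k * h m" by (simp add: g_def h_def power_add power_mult_distrib)
    finally show ?thesis .
  qed
  have g0: "g k \<ge> 0" for k using K by (simp add: g_def)
  have h0: "h m \<ge> 0" for m using K by (simp add: h_def)
  have sg: "summable g" unfolding g_def using exp_series_summable[of "cmod a * K" 1] by simp
  have sh: "summable h" unfolding h_def by (rule exp_series_summable)
  obtain S where S1: "(\<lambda>k. suminf (w k)) sums S" and S2: "(\<lambda>n. \<Sum>k\<le>n. w k (n - k)) sums S"
    using double_series[OF bnd g0 h0 sg sh] by blast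
  have row: "suminf (w k) = eterm a B (expo b B x) k" for k
  proof -
    have comm: "(B ^^ k) \<circ> B = B \<circ> (B ^^ k)" by (simp add: fun_eq_iff funpow_swap1)
    have pcm: "(B ^^ m) ((B ^^ k) y) = (B ^^ (k + m)) y" for m y
    proof -
      have "(B ^^ m) \<circ> (B ^^ k) = B ^^ (k + m)" by (simp flip: funpow_add add: add.commute)
      then show ?thesis by (metis comp_apply)
    qed
    have "eterm a B (expo b B x) k = scaleC (a ^ k / fact k) (expo b B ((B ^^ k) x))"
      by (simp add: eterm_def expo_commute[OF bB cbounded_pow[OF bB] comm])
    moreover have "(\<lambda>m. scaleC (a ^ k / fact k) (eterm b B ((B ^^ k) x) m)) sums scaleC (a ^ k / fact k) (expo b B ((B ^^ k) x))"
      by (rule bounded_linear.sums[OF bl_scaleC expo_sums[OF bB]])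
    moreover have "(\<lambda>m. scaleC (a ^ k / fact k) (eterm b B ((B ^^ k) x) m)) = w k"
      by (auto simp: fun_eq_iff w_def eterm_def scaleC_scaleC pcm)
    ultimately show ?thesis by (simp add: sums_iff)
  qed
  have diag: "(\<Sum>k\<le>n. w k (n - k)) = eterm (a + b) B x n" for n
  proof -
    have "(\<Sum>k\<le>n. w k (n - k)) = (\<Sum>k\<le>n. scaleC (a ^ k / fact k * (b ^ (n - k) / fact (n - k))) ((B ^^ n) x))"
      by (rule sum.cong[OF refl]) (auto simp: w_def)
    also have "\<dots> = scaleC (\<Sum>k\<le>n. a ^ k / fact k * (b ^ (n - k) / fact (n - k))) ((B ^^ n) x)"
      by (simp add: scaleC_sum_left)
    also have "\<dots> = eterm (a + b) B x n" by (simp add: eterm_def binom_coeff)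
    finally show ?thesis .
  qed
  have "eterm a B (expo b B x) sums S" using S1 by (simp add: row)
  moreover have "eterm (a + b) B x sums S" using S2 by (simp add: diag)
  ultimately show ?thesis unfolding expo_def by (simp add: sums_iff)
qed

lemma cnj_fact: "cnj (fact k :: complex) = fact k"
  by (metis complex_cnj_of_nat of_nat_fact)

lemma expo_inv:
  fixes B :: "'a::chilbert \<Rightarrow> 'a"
  assumes "cbounded B" shows "expo a B (expo (- a) B z) = z"
  using expo_add[OF assms] expo_zero[OF assms] by simp

lemma expo_inv':
  fixes B :: "'a::chilbert \<Rightarrow> 'a"
  assumes "cbounded B" shows "expo (- a) B (expo a B z) = z"
  using expo_add[OF assms] expo_zero[OF assms] by simp

lemma fuglede:
  fixes N X :: "'a::chilbert \<Rightarrow> 'a"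
  assumes bN: "cbounded N" and adj: "is_adj N N'" and nn: "N \<circ> N' = N' \<circ> N"
    and bX: "cbounded X" and nx: "N \<circ> X = X \<circ> N"
  shows "N' \<circ> X = X \<circ> N'"
proof -
  have bN': "cbounded N'" by (rule is_adj_cbounded[OF adj bN])
  have adj': "is_adj N' N" by (rule is_adj_sym[OF adj])
  obtain KX where KX: "KX \<ge> 0" "\<And>x. norm (X x) \<le> KX * norm x" using cbounded_bound[OF bX] by blast
  obtain K where K: "K \<ge> 0" "\<And>x. norm (N x) \<le> K * norm x" using cbounded_bound[OF bN] by blast
  obtain K' where K': "K' \<ge> 0" "\<And>x. norm (N' x) \<le> K' * norm x" using cbounded_bound[OF bN'] by blast
  have c1: "X (expo m N z) = expo m N (X z)" for m z
    by (rule expo_commute[OF bN bX nx[symmetric]])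
  have c0: "N' (expo a N z) = expo a N (N' z)" for a z
    by (rule expo_commute[OF bN bN' nn[symmetric]])
  have c2: "expo a N (expo b N' z) = expo b N' (expo a N z)" for a b z
  proof -
    have "expo a N \<circ> N' = N' \<circ> expo a N" by (simp add: fun_eq_iff c0)
    then show ?thesis by (rule expo_commute[OF bN' expo_cbounded[OF bN]])
  qed
  define U where "U = (\<lambda>l z. expo l N' (expo (- cnj l) N z))"
  have Uiso: "norm (U l z) = norm z" for l z
  proof -
    define P where "P = expo l N'"
    define Q where "Q = expo (- cnj l) N"
    have aP: "is_adj P (expo (cnj l) N)" unfolding P_def by (rule expo_adj[OF bN' adj'])
    have aQ: "is_adj Q (expo (- l) N')" unfolding Q_def using expo_adj[OF bN adj, of "- cnj l"] by simp
    have "cinner (U l z) (U l z) = cinner (Q z) (expo (cnj l) N (P (Q z)))"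
      unfolding U_def P_def[symmetric] Q_def[symmetric] by (rule is_adjD[OF aP])
    also have "expo (cnj l) N (P (Q z)) = P z"
      unfolding P_def Q_def by (simp add: c2 expo_inv[OF bN])
    also have "cinner (Q z) (P z) = cinner z (expo (- l) N' (P z))" by (rule is_adjD[OF aQ])
    also have "expo (- l) N' (P z) = z" unfolding P_def using expo_inv[OF bN', of "- l"] by simp
    finally have "cinner (U l z) (U l z) = cinner z z" .
    then have "complex_of_real ((norm (U l z))\<^sup>2) = complex_of_real ((norm z)\<^sup>2)" by (simp only: cinner_norm)
    then have "(norm (U l z))\<^sup>2 = (norm z)\<^sup>2" by (simp only: of_real_eq_iff)
    then show ?thesis by (simp add: power2_eq_iff_nonneg)
  qed
  have Frep: "expo l N' (X (expo (- l) N' z)) = U l (X (U (- l) z))" for l z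
  proof -
    have "U l (X (U (- l) z)) = expo l N' (expo (- cnj l) N (X (expo (- l) N' (expo (cnj l) N z))))"
      by (simp add: U_def)
    also have "expo (- cnj l) N (X (expo (- l) N' (expo (cnj l) N z))) = X (expo (- l) N' z)"
      by (simp add: c1[symmetric] c2 expo_inv[OF bN] expo_inv'[OF bN])
    finally show ?thesis by simp
  qed
  have Fbound: "norm (expo l N' (X (expo (- l) N' z))) \<le> KX * norm z" for l z
    unfolding Frep Uiso using KX(2)[of "U (- l) z"] by (simp add: Uiso)
  show ?thesis
  proof (rule ext, rule cinner_ext)
    fix x y
    define f where "f = (\<lambda>l. cinner y (expo l N' (X (expo (- l) N' x))))"
    define A where "A = (\<lambda>k m. cinner ((N ^^ k) y) (X ((N' ^^ m) x)))"
    define c where "c = (\<lambda>n. \<Sum>k\<le>n. (- 1) ^ (n - k) / (fact k * fact (n - k)) * A k (n - k))"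
    have Abnd: "cmod (A k m) \<le> K ^ k * (K' ^ m * (norm y * KX * norm x))" for k m
    proof -
      have "cmod (A k m) \<le> norm ((N ^^ k) y) * norm (X ((N' ^^ m) x))"
        unfolding A_def by (rule cauchy_schwarz)
      also have "\<dots> \<le> (K ^ k * norm y) * (KX * (K' ^ m * norm x))"
      proof (rule mult_mono)
        show "norm ((N ^^ k) y) \<le> K ^ k * norm y" by (rule pow_bound[OF K(2) K(1)])
        have "norm (X ((N' ^^ m) x)) \<le> KX * norm ((N' ^^ m) x)" by (rule KX(2))
        also have "\<dots> \<le> KX * (K' ^ m * norm x)" by (rule mult_left_mono[OF pow_bound[OF K'(2) K'(1)] KX(1)])
        finally show "norm (X ((N' ^^ m) x)) \<le> KX * (K' ^ m * norm x)" .
      qed (use K KX in auto)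
      finally show ?thesis by (simp add: algebra_simps)
    qed
    have fser: "(\<lambda>n. c n * l ^ n) sums f l" for l
    proof -
      define w where "w = (\<lambda>k m. l ^ k / fact k * ((- l) ^ m / fact m * A k m))"
      define g where "g = (\<lambda>k. (cmod l * K) ^ k / fact k)"
      define h where "h = (\<lambda>m. (cmod l * K') ^ m / fact m * (norm y * KX * norm x))"
      have bnd: "norm (w k m) \<le> g k * h m" for k m
      proof -
        have "norm (w k m) = cmod l ^ k / fact k * (cmod l ^ m / fact m * cmod (A k m))"
          by (simp add: w_def norm_mult norm_divide norm_power)
        also have "\<dots> \<le> cmod l ^ k / fact k * (cmod l ^ m / fact m * (K ^ k * (K' ^ m * (norm y * KX * norm x))))"
          by (intro mult_left_mono Abnd) auto
        also have "\<dots> = g k * h m" by (simp add: g_def h_def power_mult_distrib)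
        finally show ?thesis .
      qed
      have g0: "g k \<ge> 0" for k using K by (simp add: g_def)
      have h0: "h m \<ge> 0" for m using K' KX by (simp add: h_def)
      have sg: "summable g" unfolding g_def using exp_series_summable[of "cmod l * K" 1] by simp
      have sh: "summable h" unfolding h_def by (rule exp_series_summable)
      obtain S where S1: "(\<lambda>k. suminf (w k)) sums S" and S2: "(\<lambda>n. \<Sum>k\<le>n. w k (n - k)) sums S"
        using double_series[OF bnd g0 h0 sg sh] by blast
      define v where "v = X (expo (- l) N' x)"
      have fl: "f l = cinner (expo (cnj l) N y) v"
        unfolding f_def v_def using is_adjD[OF expo_adj[OF bN adj, of "cnj l"]] by simp
      have vser: "(\<lambda>m. X (eterm (- l) N' x m)) sums v"
        unfolding v_def by (rule bounded_linear.sums[OF cbounded_bounded_linear[OF bX] expo_sums[OF bN']])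
      have rowk: "w k sums (l ^ k / fact k * cinner ((N ^^ k) y) v)" for k
      proof -
        have "(\<lambda>m. cinner ((N ^^ k) y) (X (eterm (- l) N' x m))) sums cinner ((N ^^ k) y) v"
          by (rule bounded_linear.sums[OF bl_cinner_right vser])
        hence "(\<lambda>m. l ^ k / fact k * cinner ((N ^^ k) y) (X (eterm (- l) N' x m))) sums (l ^ k / fact k * cinner ((N ^^ k) y) v)"
          by (rule sums_mult)
        moreover have "(\<lambda>m. l ^ k / fact k * cinner ((N ^^ k) y) (X (eterm (- l) N' x m))) = w k"
          by (auto simp: fun_eq_iff w_def A_def eterm_def clinear_scaleC[OF cbounded_clinear[OF bX]] cinner_scaleC_right)
        ultimately show ?thesis by simp
      qed
      have "(\<lambda>k. cinner (eterm (cnj l) N y k) v) sums f l"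
        unfolding fl by (rule bounded_linear.sums[OF bl_cinner_left expo_sums[OF bN]])
      moreover have "cinner (eterm (cnj l) N y k) v = l ^ k / fact k * cinner ((N ^^ k) y) v" for k
        by (simp add: eterm_def cinner_scaleC_left cnj_fact)
      ultimately have "(\<lambda>k. suminf (w k)) sums f l" using rowk by (simp add: sums_iff)
      hence fS: "f l = S" using S1 sums_unique2 by blast
      have "(\<Sum>k\<le>n. w k (n - k)) = c n * l ^ n" for n
      proof -
        have "(\<Sum>k\<le>n. w k (n - k)) = (\<Sum>k\<le>n. (- 1) ^ (n - k) / (fact k * fact (n - k)) * A k (n - k) * l ^ n)"
        proof (rule sum.cong[OF refl])
          fix k assume "k \<in> {..n}"
          hence kn: "k \<le> n" by simp
          have "l ^ k * (- l) ^ (n - k) = (- 1) ^ (n - k) * l ^ n"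
            using kn by (simp add: power_minus[of l] power_add[symmetric])
          then show "w k (n - k) = (- 1) ^ (n - k) / (fact k * fact (n - k)) * A k (n - k) * l ^ n"
            unfolding w_def by (simp add: field_simps)
        qed
        also have "\<dots> = c n * l ^ n" by (simp add: c_def sum_distrib_right)
        finally show ?thesis .
      qed
      then show ?thesis using S2 fS by simp
    qed
    have fsum: "summable (\<lambda>n. c n * l ^ n)" for l using fser sums_summable by blast
    have feq: "f = (\<lambda>l. \<Sum>n. c n * l ^ n)" using fser sums_unique by (auto simp: fun_eq_iff)
    have deriv: "(f has_field_derivative (\<Sum>n. diffs c n * l ^ n)) (at l)" for l
      unfolding feq by (rule termdiffs_strong_converges_everywhere[OF fsum])
    have hol: "f holomorphic_on UNIV"
      unfolding holomorphic_on_def field_differentiable_def using deriv by blast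
    have bdd: "bounded (range f)"
      unfolding bounded_iff
    proof (intro exI ballI)
      fix u assume "u \<in> range f"
      then obtain l where u: "u = f l" by blast
      have "cmod (f l) \<le> norm y * norm (expo l N' (X (expo (- l) N' x)))"
        unfolding f_def by (rule cauchy_schwarz)
      also have "\<dots> \<le> norm y * (KX * norm x)" by (rule mult_left_mono[OF Fbound]) simp
      finally show "norm u \<le> norm y * (KX * norm x)" using u by simp
    qed
    obtain c0 where c0: "\<And>l. f l = c0"
      using Liouville_theorem[OF hol bdd] unfolding constant_on_def by blast
    have "f = (\<lambda>_. c0)" using c0 by auto
    hence "(f has_field_derivative 0) (at 0)" by simp
    moreover have "(f has_field_derivative c 1) (at 0)"
      using deriv[of 0] by (simp add: powser_zero diffs_def)
    ultimately have c1z: "c 1 = 0" using DERIV_unique by blast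
    have "c 1 = A 1 0 - A 0 1" by (simp add: c_def)
    also have "A 1 0 = cinner y (N' (X x))" unfolding A_def using is_adjD[OF adj, of y "X x"] by simp
    also have "A 0 1 = cinner y (X (N' x))" by (simp add: A_def)
    finally show "cinner y ((N' \<circ> X) x) = cinner y ((X \<circ> N') x)" using c1z by simp
  qed
qed

lemma mono_op_0: "mono_op 0 T \<alpha> = id" by (simp add: mono_op_def)
lemma mono_op_Suc: "mono_op (Suc d) T \<alpha> = (T d ^^ \<alpha> d) \<circ> mono_op d T \<alpha>"
  by (simp add: mono_op_def)

lemma clinear_mono_op:
  fixes T :: "nat \<Rightarrow> 'a::complex_vector \<Rightarrow> 'a"
  shows "(\<And>i. i < d \<Longrightarrow> clinear (T i)) \<Longrightarrow> clinear (mono_op d T \<alpha>)"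
  by (induction d) (auto simp: mono_op_0 mono_op_Suc clinear_id clinear_comp clinear_pow)

lemma cbounded_mono_op:
  fixes T :: "nat \<Rightarrow> 'a::complex_inner \<Rightarrow> 'a"
  shows "(\<And>i. i < d \<Longrightarrow> cbounded (T i)) \<Longrightarrow> cbounded (mono_op d T \<alpha>)"
  by (induction d) (auto simp: mono_op_0 mono_op_Suc cbounded_id cbounded_comp cbounded_pow)

lemma pow_intertw_pt:
  fixes S :: "'b \<Rightarrow> 'b" and T :: "'a \<Rightarrow> 'a"
  assumes "\<And>x. S (C x) = C (T x)" shows "(S ^^ k) (C x) = C ((T ^^ k) x)"
  by (induction k) (simp_all add: assms)

lemma pow_intertw:
  fixes S :: "'b \<Rightarrow> 'b" and T :: "'a \<Rightarrow> 'a"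
  assumes "S \<circ> C = C \<circ> T" shows "(S ^^ k) \<circ> C = C \<circ> (T ^^ k)"
proof -
  have "S (C x) = C (T x)" for x using assms by (metis comp_apply)
  then show ?thesis by (simp add: fun_eq_iff pow_intertw_pt)
qed

lemma mono_op_Suc_pt: "mono_op (Suc d) T \<alpha> x = (T d ^^ \<alpha> d) (mono_op d T \<alpha> x)"
  by (simp add: mono_op_Suc)

lemma mono_intertw_pt:
  fixes S :: "nat \<Rightarrow> 'b \<Rightarrow> 'b" and T :: "nat \<Rightarrow> 'a \<Rightarrow> 'a"
  shows "(\<And>i x. i < d \<Longrightarrow> S i (C x) = C (T i x)) \<Longrightarrow> mono_op d S \<alpha> (C x) = C (mono_op d T \<alpha> x)"
proof (induction d arbitrary: x)
  case 0 then show ?case by (simp add: mono_op_0)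
next
  case (Suc d)
  have IH: "mono_op d S \<alpha> (C y) = C (mono_op d T \<alpha> y)" for y using Suc by simp
  have P: "(S d ^^ \<alpha> d) (C y) = C ((T d ^^ \<alpha> d) y)" for y by (rule pow_intertw_pt) (use Suc in simp)
  show ?case by (simp add: mono_op_Suc_pt IH P)
qed

lemma mono_intertw:
  fixes S :: "nat \<Rightarrow> 'b \<Rightarrow> 'b" and T :: "nat \<Rightarrow> 'a \<Rightarrow> 'a"
  assumes "\<And>i. i < d \<Longrightarrow> S i \<circ> C = C \<circ> T i"
  shows "mono_op d S \<alpha> \<circ> C = C \<circ> mono_op d T \<alpha>"
proof -
  have "S i (C x) = C (T i x)" if "i < d" for i x using assms[OF that] by (metis comp_apply)
  then show ?thesis by (simp add: fun_eq_iff mono_intertw_pt)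
qed

lemma mono_op_adj:
  fixes T S :: "nat \<Rightarrow> 'a::complex_inner \<Rightarrow> 'a"
  assumes adj: "\<And>i. i < d \<Longrightarrow> is_adj (T i) (S i)"
    and Sc: "\<And>i j. i < d \<Longrightarrow> j < d \<Longrightarrow> S i \<circ> S j = S j \<circ> S i"
  shows "is_adj (mono_op d T \<alpha>) (mono_op d S \<alpha>)"
  using assms
proof (induction d)
  case 0 then show ?case by (simp add: mono_op_0 is_adj_def)
next
  case (Suc d)
  have IH: "is_adj (mono_op d T \<alpha>) (mono_op d S \<alpha>)" using Suc by simp
  have "is_adj ((T d ^^ \<alpha> d) \<circ> mono_op d T \<alpha>) (mono_op d S \<alpha> \<circ> (S d ^^ \<alpha> d))"
    by (rule is_adj_comp[OF is_adj_pow IH]) (use Suc in simp)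
  moreover have "mono_op d S \<alpha> \<circ> (S d ^^ \<alpha> d) = (S d ^^ \<alpha> d) \<circ> mono_op d S \<alpha>"
  proof -
    have *: "(S d ^^ \<alpha> d) \<circ> S i = S i \<circ> (S d ^^ \<alpha> d)" if "i < d" for i
      by (rule pow_intertw) (use Suc.prems(2)[of d i] that in \<open>simp add: comp_def\<close>)
    show ?thesis
    proof (rule mono_intertw)
      fix i assume "i < d" then show "S i \<circ> (S d ^^ \<alpha> d) = (S d ^^ \<alpha> d) \<circ> S i" using * by simp
    qed
  qed
  ultimately show ?case by (simp only: mono_op_Suc)
qed

lemma cbounded_zero: "cbounded (\<lambda>x::'a::complex_inner. 0::'b::complex_inner)"
  by (rule cboundedI[of _ 0]) (auto simp: clinear_def)

lemma cbounded_add: assumes "cbounded F" "cbounded G" shows "cbounded (\<lambda>x. F x + G x)"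
proof -
  obtain K where K: "K \<ge> 0" "\<And>x. norm (F x) \<le> K * norm x" using cbounded_bound[OF assms(1)] by blast
  obtain L where L: "L \<ge> 0" "\<And>x. norm (G x) \<le> L * norm x" using cbounded_bound[OF assms(2)] by blast
  have cl: "clinear (\<lambda>x. F x + G x)"
    using cbounded_clinear[OF assms(1)] cbounded_clinear[OF assms(2)]
    by (simp add: clinear_def scaleC_add_right algebra_simps)
  have "norm (F x + G x) \<le> (K + L) * norm x" for x
    using norm_triangle_ineq[of "F x" "G x"] K(2)[of x] L(2)[of x] by (simp add: distrib_right)
  then show ?thesis using cl by (intro cboundedI)
qed

lemma cbounded_diff: assumes "cbounded F" "cbounded G" shows "cbounded (\<lambda>x. F x - G x)"
proof -
  obtain K where K: "K \<ge> 0" "\<And>x. norm (F x) \<le> K * norm x" using cbounded_bound[OF assms(1)] by blast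
  obtain L where L: "L \<ge> 0" "\<And>x. norm (G x) \<le> L * norm x" using cbounded_bound[OF assms(2)] by blast
  have cl: "clinear (\<lambda>x. F x - G x)"
    using cbounded_clinear[OF assms(1)] cbounded_clinear[OF assms(2)]
    by (simp add: clinear_def scaleC_diff_right algebra_simps)
  have "norm (F x - G x) \<le> (K + L) * norm x" for x
    using norm_triangle_ineq4[of "F x" "G x"] K(2)[of x] L(2)[of x] by (simp add: distrib_right)
  then show ?thesis using cl by (intro cboundedI)
qed

lemma cbounded_scale: assumes "cbounded F" shows "cbounded (\<lambda>x. scaleC c (F x))"
proof -
  obtain K where K: "K \<ge> 0" "\<And>x. norm (F x) \<le> K * norm x" using cbounded_bound[OF assms(1)] by blast
  have cl: "clinear (\<lambda>x. scaleC c (F x))"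
    using cbounded_clinear[OF assms(1)] by (simp add: clinear_def scaleC_add_right scaleC_scaleC mult.commute)
  have "norm (scaleC c (F x)) \<le> (cmod c * K) * norm x" for x
    using K(2)[of x] by (simp add: norm_scaleC mult.assoc mult_left_mono)
  then show ?thesis using cl by (intro cboundedI)
qed

lemma cbounded_sum:
  fixes F :: "'i \<Rightarrow> 'a::complex_inner \<Rightarrow> 'b::complex_inner"
  shows "(\<And>i. i \<in> I \<Longrightarrow> cbounded (F i)) \<Longrightarrow> cbounded (\<lambda>x. \<Sum>i\<in>I. F i x)"
proof (induction I rule: infinite_finite_induct)
  case (infinite I) then show ?case by (simp add: cbounded_zero)
next
  case empty then show ?case by (simp add: cbounded_zero)
next
  case (insert i I) then show ?case by (simp add: cbounded_add)
qed

lemma cbounded_poly_op: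
  fixes T :: "nat \<Rightarrow> 'a::complex_inner \<Rightarrow> 'a"
  assumes "\<And>i. i < d \<Longrightarrow> cbounded (T i)"
  shows "cbounded (poly_op d T p)"
  unfolding poly_op_def
  by (rule cbounded_sum) (intro cbounded_scale cbounded_mono_op assms)

lemma poly_intertw:
  fixes S :: "nat \<Rightarrow> 'b::complex_vector \<Rightarrow> 'b" and T :: "nat \<Rightarrow> 'a::complex_vector \<Rightarrow> 'a"
  assumes "clinear C" "\<And>i. i < d \<Longrightarrow> S i \<circ> C = C \<circ> T i"
  shows "poly_op d S p (C x) = C (poly_op d T p x)"
proof -
  have m: "mono_op d S \<alpha> (C x) = C (mono_op d T \<alpha> x)" for \<alpha>
    using mono_intertw[of d S C T \<alpha>, OF assms(2)] by (metis comp_apply)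
  show ?thesis
    by (simp add: poly_op_def m clinear_sum[OF assms(1)] clinear_scaleC[OF assms(1)])
qed

theorem lemma2p3:
  fixes d n :: nat
    and T :: "nat \<Rightarrow> 'h::chilbert \<Rightarrow> 'h"
    and N :: "nat \<Rightarrow> 'k::chilbert \<Rightarrow> 'k"
    and V :: "'h \<Rightarrow> 'k"
    and p q :: "nat \<Rightarrow> (nat \<Rightarrow> nat) \<Rightarrow> complex"
  assumes "minimal_normal_extension d T N V"
    and "\<forall>i<n. is_poly d (p i) \<and> is_poly d (q i)"
    and "(\<lambda>x. \<Sum>i<n. cadjoint (poly_op d T (q i)) (poly_op d T (p i) x)) = id"
  shows "(\<lambda>x. \<Sum>i<n. cadjoint (poly_op d N (q i)) (poly_op d N (p i) x)) = id"
proof -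
  have ext: "normal_extension d T N V"
    and dense: "closure (cspan {mono_op d (\<lambda>i. cadjoint (N i)) \<alpha> (V h) | \<alpha> h. True}) = UNIV"
    using assms(1) by (auto simp: minimal_normal_extension_def)
  have bT: "\<And>i. i < d \<Longrightarrow> cbounded (T i)" and cT: "\<And>i j. i < d \<Longrightarrow> j < d \<Longrightarrow> T i \<circ> T j = T j \<circ> T i"
    and bN: "\<And>i. i < d \<Longrightarrow> cbounded (N i)" and cN: "\<And>i j. i < d \<Longrightarrow> j < d \<Longrightarrow> N i \<circ> N j = N j \<circ> N i"
    and nN: "\<And>i. i < d \<Longrightarrow> cnormal (N i)" and iV: "cisometry V"
    and NV: "\<And>i. i < d \<Longrightarrow> N i \<circ> V = V \<circ> T i"
    using ext by (auto simp: normal_extension_def commuting_tuple_def)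
  define Ns where "Ns = (\<lambda>i. cadjoint (N i))"
  have adjN: "is_adj (N i) (Ns i)" if "i < d" for i unfolding Ns_def by (rule cadjoint_adj[OF bN[OF that]])
  have adjNs: "is_adj (Ns i) (N i)" if "i < d" for i by (rule is_adj_sym[OF adjN[OF that]])
  have bNs: "cbounded (Ns i)" if "i < d" for i by (rule is_adj_cbounded[OF adjN[OF that] bN[OF that]])
  have nn: "N i \<circ> Ns i = Ns i \<circ> N i" if "i < d" for i using nN[OF that] by (simp add: cnormal_def Ns_def)
  have fug: "Ns j \<circ> N k = N k \<circ> Ns j" if "j < d" "k < d" for j k
    by (rule fuglede[OF bN[OF that(1)] adjN[OF that(1)] nn[OF that(1)] bN[OF that(2)] cN[OF that(1,2)]])
  have cNs: "Ns i \<circ> Ns j = Ns j \<circ> Ns i" if "i < d" "j < d" for i j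
  proof -
    have "is_adj (N j \<circ> N i) (Ns i \<circ> Ns j)" by (rule is_adj_comp[OF adjN adjN]) (use that in auto)
    moreover have "is_adj (N j \<circ> N i) (Ns j \<circ> Ns i)"
      using is_adj_comp[OF adjN[OF that(1)] adjN[OF that(2)]] cN[OF that] by simp
    ultimately show ?thesis by (rule is_adj_unique)
  qed
  define S where "S = (\<lambda>\<alpha>. mono_op d Ns \<alpha>)"
  define M where "M = (\<lambda>\<alpha>. mono_op d N \<alpha>)"
  define MT where "MT = (\<lambda>\<alpha>. mono_op d T \<alpha>)"
  define PN where "PN = (\<lambda>i. poly_op d N (p i))"
  define QN where "QN = (\<lambda>i. poly_op d N (q i))"
  define PT where "PT = (\<lambda>i. poly_op d T (p i))"
  define QT where "QT = (\<lambda>i. poly_op d T (q i))"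
  have clV: "clinear V" using iV by (simp add: cisometry_def)
  have isoV: "cinner (V a) (V b) = cinner a b" for a b using iV by (simp add: cisometry_def)
  have bS: "cbounded (S \<alpha>)" for \<alpha> unfolding S_def by (rule cbounded_mono_op[OF bNs])
  have bM: "cbounded (M \<alpha>)" for \<alpha> unfolding M_def by (rule cbounded_mono_op[OF bN])
  have bMT: "cbounded (MT \<alpha>)" for \<alpha> unfolding MT_def by (rule cbounded_mono_op[OF bT])
  have adjS: "is_adj (S \<alpha>) (M \<alpha>)" for \<alpha>
    unfolding S_def M_def by (rule mono_op_adj[OF adjNs cN])
  have adjM: "is_adj (M \<alpha>) (S \<alpha>)" for \<alpha> by (rule is_adj_sym[OF adjS])
  have SN: "N k (S \<alpha> x) = S \<alpha> (N k x)" if "k < d" for k \<alpha> x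
  proof -
    have "mono_op d Ns \<alpha> \<circ> N k = N k \<circ> mono_op d Ns \<alpha>"
      by (rule mono_intertw) (use fug that in auto)
    then show ?thesis unfolding S_def by (metis comp_apply)
  qed
  have SM: "M \<beta> (S \<alpha> x) = S \<alpha> (M \<beta> x)" for \<alpha> \<beta> x
  proof -
    have "mono_op d N \<beta> \<circ> S \<alpha> = S \<alpha> \<circ> mono_op d N \<beta>"
      by (rule mono_intertw) (auto simp: fun_eq_iff SN)
    then show ?thesis unfolding M_def by (metis comp_apply)
  qed
  have SP: "poly_op d N r (S \<alpha> x) = S \<alpha> (poly_op d N r x)" for r \<alpha> x
    by (rule poly_intertw[OF cbounded_clinear[OF bS]]) (auto simp: fun_eq_iff SN)
  have MV: "M \<alpha> (V x) = V (MT \<alpha> x)" for \<alpha> x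
    unfolding M_def MT_def by (rule mono_intertw_pt) (use NV in \<open>auto simp: fun_eq_iff\<close>)
  have PV: "poly_op d N r (V x) = V (poly_op d T r x)" for r x
    by (rule poly_intertw[OF clV NV])
  have TM: "MT \<alpha> (poly_op d T r x) = poly_op d T r (MT \<alpha> x)" for r \<alpha> x
  proof -
    have Tc: "T k (MT \<alpha> y) = MT \<alpha> (T k y)" if "k < d" for k y
    proof -
      have "mono_op d T \<alpha> \<circ> T k = T k \<circ> mono_op d T \<alpha>"
        by (rule mono_intertw) (use cT that in auto)
      then show ?thesis unfolding MT_def by (metis comp_apply)
    qed
    show ?thesis
      by (rule poly_intertw[OF cbounded_clinear[OF bMT], symmetric]) (auto simp: fun_eq_iff Tc)
  qed
  have bQN: "cbounded (QN i)" for i unfolding QN_def by (rule cbounded_poly_op[OF bN])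
  have bPN: "cbounded (PN i)" for i unfolding PN_def by (rule cbounded_poly_op[OF bN])
  have bQT: "cbounded (QT i)" for i unfolding QT_def by (rule cbounded_poly_op[OF bT])
  have adjQN: "is_adj (QN i) (cadjoint (QN i))" for i by (rule cadjoint_adj[OF bQN])
  have adjQT: "is_adj (QT i) (cadjoint (QT i))" for i by (rule cadjoint_adj[OF bQT])
  define A where "A = (\<lambda>x. \<Sum>i<n. cadjoint (QN i) (PN i x))"
  have hyp: "(\<Sum>i<n. cadjoint (QT i) (PT i x)) = x" for x
    using assms(3) unfolding QT_def PT_def by (metis id_apply)
  have key: "cinner (S \<beta> (V h')) (A (S \<alpha> (V h))) = cinner (S \<beta> (V h')) (S \<alpha> (V h))" for \<alpha> \<beta> h h'
  proof -
    have trm: "cinner (S \<beta> (V h')) (cadjoint (QN i) (PN i (S \<alpha> (V h))))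
        = cinner (MT \<alpha> h') (cadjoint (QT i) (PT i (MT \<beta> h)))" for i
    proof -
      have "cinner (S \<beta> (V h')) (cadjoint (QN i) (PN i (S \<alpha> (V h)))) = cinner (QN i (S \<beta> (V h'))) (PN i (S \<alpha> (V h)))"
        by (rule is_adjD[OF adjQN, symmetric])
      also have "\<dots> = cinner (S \<beta> (QN i (V h'))) (S \<alpha> (PN i (V h)))"
        by (simp add: QN_def PN_def SP)
      also have "\<dots> = cinner (QN i (V h')) (M \<beta> (S \<alpha> (PN i (V h))))"
        by (rule is_adjD[OF adjS])
      also have "\<dots> = cinner (QN i (V h')) (S \<alpha> (M \<beta> (PN i (V h))))"
        by (simp add: SM)
      also have "\<dots> = cinner (M \<alpha> (QN i (V h'))) (M \<beta> (PN i (V h)))"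
        by (rule is_adjD[OF adjM, symmetric])
      also have "\<dots> = cinner (V (MT \<alpha> (QT i h'))) (V (MT \<beta> (PT i h)))"
        by (simp add: QN_def PN_def QT_def PT_def PV MV)
      also have "\<dots> = cinner (QT i (MT \<alpha> h')) (PT i (MT \<beta> h))"
        by (simp add: isoV QT_def PT_def TM)
      also have "\<dots> = cinner (MT \<alpha> h') (cadjoint (QT i) (PT i (MT \<beta> h)))"
        by (rule is_adjD[OF adjQT])
      finally show ?thesis .
    qed
    have "cinner (S \<beta> (V h')) (A (S \<alpha> (V h))) = (\<Sum>i<n. cinner (MT \<alpha> h') (cadjoint (QT i) (PT i (MT \<beta> h))))"
      by (simp add: A_def cinner_sum_right trm)
    also have "\<dots> = cinner (MT \<alpha> h') (MT \<beta> h)"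
      by (simp add: cinner_sum_right[symmetric] hyp)
    also have "\<dots> = cinner (M \<alpha> (V h')) (M \<beta> (V h))" by (simp add: MV isoV)
    also have "\<dots> = cinner (V h') (S \<alpha> (M \<beta> (V h)))" by (rule is_adjD[OF adjM])
    also have "\<dots> = cinner (V h') (M \<beta> (S \<alpha> (V h)))" by (simp add: SM)
    also have "\<dots> = cinner (S \<beta> (V h')) (S \<alpha> (V h))" by (rule is_adjD[OF adjS, symmetric])
    finally show ?thesis .
  qed
  define D where "D = (\<lambda>x. A x - x)"
  have bA: "cbounded A" unfolding A_def
    by (rule cbounded_sum) (rule cbounded_comp[unfolded comp_def, OF is_adj_cbounded[OF adjQN bQN] bPN])
  have bD: "cbounded D" unfolding D_def by (rule cbounded_diff[OF bA cbounded_id[unfolded id_def]])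
  have clD: "clinear D" by (rule cbounded_clinear[OF bD])
  define Gs where "Gs = {mono_op d (\<lambda>i. cadjoint (N i)) \<alpha> (V h) | \<alpha> h. True}"
  have Gs_eq: "Gs = {S \<alpha> (V h) | \<alpha> h. True}" by (simp add: Gs_def S_def Ns_def)
  have g0: "cinner g' (D g) = 0" if "g \<in> Gs" "g' \<in> Gs" for g g'
    using that key by (auto simp: Gs_eq D_def cinner_diff_right)
  have span0: "cinner u (D v) = 0" if hu: "u \<in> cspan Gs" and hv: "v \<in> cspan Gs" for u v
  proof -
    obtain F c where u: "u = (\<Sum>x\<in>F. scaleC (c x) x)" "finite F" "F \<subseteq> Gs"
      using hu by (auto simp: cspan_def)
    obtain F' c' where v: "v = (\<Sum>x\<in>F'. scaleC (c' x) x)" "finite F'" "F' \<subseteq> Gs"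
      using hv by (auto simp: cspan_def)
    have "cinner u (D v) = (\<Sum>y\<in>F'. c' y * (\<Sum>x\<in>F. cnj (c x) * cinner x (D y)))"
      by (simp add: u(1) v(1) clinear_sum[OF clD] clinear_scaleC[OF clD] cinner_sum_left cinner_sum_right
          cinner_scaleC_left cinner_scaleC_right)
    also have "\<dots> = 0" using u(3) v(3) g0 by (force intro!: sum.neutral)
    finally show ?thesis .
  qed
  have bl_D: "bounded_linear D" by (rule cbounded_bounded_linear[OF bD])
  have all1: "cinner u (D v) = 0" if "u \<in> cspan Gs" for u v
  proof -
    have "closed {v. cinner u (D v) = 0}"
    proof (rule closed_Collect_eq)
      show "continuous_on UNIV (\<lambda>v. cinner u (D v))"
        using bounded_linear_compose[OF bl_cinner_right bl_D] linear_continuous_on by blast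
    qed simp
    moreover have "cspan Gs \<subseteq> {v. cinner u (D v) = 0}" using span0 that by auto
    ultimately have "closure (cspan Gs) \<subseteq> {v. cinner u (D v) = 0}" by (rule closure_minimal[rotated])
    then show ?thesis using dense unfolding Gs_def by auto
  qed
  have all2: "cinner u (D v) = 0" for u v
  proof -
    have "closed {u. cinner u (D v) = 0}"
    proof (rule closed_Collect_eq)
      show "continuous_on UNIV (\<lambda>u. cinner u (D v))"
        using bl_cinner_left linear_continuous_on by blast
    qed simp
    moreover have "cspan Gs \<subseteq> {u. cinner u (D v) = 0}" using all1 by auto
    ultimately have "closure (cspan Gs) \<subseteq> {u. cinner u (D v) = 0}" by (rule closure_minimal[rotated])
    then show ?thesis using dense unfolding Gs_def by auto
  qed
  have "A x = x" for x
  proof -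
    have "cinner (D x) (D x) = 0" by (rule all2)
    then show ?thesis by (simp add: D_def)
  qed
  then show ?thesis by (auto simp: fun_eq_iff A_def QN_def PN_def)
qed

end
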